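(* Let $k$ be a positive integer and $p$ a prime with $(p-1)\nmid k$. Let $a_{1},\dots,a_{s},n$ be integers such that $p\nmid a_{j}$ for at least $3k$ of the indices $j$. Then $\chi_{p}(\mathbf a,n)>0$.
   Context: $\varphi$ is Euler's function. For $\mathbf a=(a_1,\dots,a_s)$ and $n\in\mathbb Z$, let $M_{\mathbf a,n}(p^m)$ be the number of $(x_1,\dots,x_s)\in((\mathbb Z/p^m\mathbb Z)^\times)^s$ with $a_1x_1^k+\dots+a_sx_s^k\equiv n\pmod{p^m}$, and $\chi_p(\mathbf a,n)=\lim_{m\to\infty}p^m\varphi(p^m)^{-s}M_{\mathbf a,n}(p^m)$ (the $p$-adic density of the equation $a_1x_1^k+\dots+a_sx_s^k=n$ in units). *)

theory Defs
  imports "HOL-Analysis.Analysis" "HOL-Number_Theory.Number_Theory"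
begin

definition M_count :: "nat \<Rightarrow> nat \<Rightarrow> (nat \<Rightarrow> int) \<Rightarrow> int \<Rightarrow> nat \<Rightarrow> nat \<Rightarrow> nat" where
  "M_count k s a n p m = card {x \<in> {..<s} \<rightarrow>\<^sub>E {0..<int p ^ m}.
      (\<forall>j<s. coprime (x j) (int p ^ m)) \<and>
      [(\<Sum>j<s. a j * x j ^ k) = n] (mod (int p ^ m))}"

definition chi_seq :: "nat \<Rightarrow> nat \<Rightarrow> (nat \<Rightarrow> int) \<Rightarrow> int \<Rightarrow> nat \<Rightarrow> nat \<Rightarrow> real" where
  "chi_seq k s a n p m = real (p ^ m) * real (M_count k s a n p m) / real (totient (p ^ m)) ^ s"

definition chi_p :: "nat \<Rightarrow> nat \<Rightarrow> (nat \<Rightarrow> int) \<Rightarrow> int \<Rightarrow> nat \<Rightarrow> real" where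
  "chi_p k s a n p = lim (chi_seq k s a n p)"

end

theory Submission
  imports Defs
begin


lemma card_mod_class:
  fixes N c r :: nat
  assumes "r < N"
  shows "card {t. t < c * N \<and> t mod N = r} = c"
proof -
  have "{t. t < c * N \<and> t mod N = r} = (\<lambda>u. r + N * u) ` {..<c}"
  proof (rule Set.set_eqI)
    fix t show "t \<in> {t. t < c * N \<and> t mod N = r} \<longleftrightarrow> t \<in> (\<lambda>u. r + N * u) ` {..<c}"
    proof
      assume t: "t \<in> {t. t < c * N \<and> t mod N = r}"
      then have "t = r + N * (t div N)" using mod_mult_div_eq[of t N] by simp
      moreover have "t div N < c" using t assms by (auto simp: div_less_iff_less_mult)
      ultimately show "t \<in> (\<lambda>u. r + N * u) ` {..<c}" by blast
    next
      assume "t \<in> (\<lambda>u. r + N * u) ` {..<c}"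
      then obtain u where u: "u < c" "t = r + N * u" by auto
      have "r + N * u < N + N * u" using assms by simp
      also have "\<dots> = N * Suc u" by simp
      also have "\<dots> \<le> N * c" using u(1) by (intro mult_le_mono2) simp
      finally show "t \<in> {t. t < c * N \<and> t mod N = r}" using u assms by (simp add: mult.commute)
    qed
  qed
  moreover have "inj_on (\<lambda>u. r + N * u) {..<c}" using assms by (auto simp: inj_on_def)
  ultimately show ?thesis by (simp add: card_image)
qed

lemma cong_mult_gcd_cancel:
  fixes k N t t' :: nat
  assumes "N > 0"
  shows "[k * t = k * t'] (mod N) \<longleftrightarrow> [t = t'] (mod N div gcd k N)"
proof -
  define K where "K = gcd k N"
  define k' where "k' = k div K"
  define L where "L = N div K"
  have K0: "K > 0" using assms by (simp add: K_def)
  have k': "k = K * k'" unfolding k'_def K_def by simp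
  have L: "N = K * L" unfolding L_def K_def by simp
  have cop: "coprime k' L"
    unfolding k'_def L_def K_def using assms by (intro div_gcd_coprime) simp
  have "[k * t = k * t'] (mod N) \<longleftrightarrow> [K * (k' * t) = K * (k' * t')] (mod K * L)"
    by (simp add: k' L mult.assoc)
  also have "\<dots> \<longleftrightarrow> [k' * t = k' * t'] (mod L)"
    using K0 unfolding cong_def mod_mult_mult1 by simp
  also have "\<dots> \<longleftrightarrow> [t = t'] (mod L)" using cop by (simp add: cong_mult_lcancel_nat)
  finally show ?thesis by (simp add: L_def K_def)
qed


definition sumset :: "int \<Rightarrow> int set \<Rightarrow> int set \<Rightarrow> int set" where
  "sumset q A B = {(x + y) mod q | x y. x \<in> A \<and> y \<in> B}"

definition incong :: "int \<Rightarrow> int set \<Rightarrow> bool" where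
  "incong p B \<longleftrightarrow> (\<forall>x\<in>B. \<forall>y\<in>B. [x = y] (mod p) \<longrightarrow> x = y)"

lemma sumset_sub: "q > 0 \<Longrightarrow> sumset q A B \<subseteq> {0..<q}"
  unfolding sumset_def by auto

lemma sumset_full:
  assumes "q > 0" "A = {0..<q}" "B \<noteq> {}"
  shows "sumset q A B = {0..<q}"
proof (rule antisym)
  show "sumset q A B \<subseteq> {0..<q}" using assms(1) by (rule sumset_sub)
  show "{0..<q} \<subseteq> sumset q A B"
  proof
    fix y assume y: "y \<in> {0..<q}"
    obtain b where b: "b \<in> B" using assms(3) by auto
    have "(y - b) mod q \<in> A" using assms(1,2) by simp
    moreover have "((y - b) mod q + b) mod q = y" using y by (simp add: mod_add_left_eq)
    ultimately show "y \<in> sumset q A B" unfolding sumset_def using b by force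
  qed
qed

lemma mod_inj_on:
  fixes q e :: int and B :: "int set"
  assumes "B \<subseteq> {0..<q}"
  shows "inj_on (\<lambda>b. (b + e) mod q) B"
proof (rule inj_onI)
  fix x y assume xy: "x \<in> B" "y \<in> B" "(x + e) mod q = (y + e) mod q"
  then have "[x + e = y + e] (mod q)" by (simp add: cong_def)
  then have "[x = y] (mod q)" by (simp add: cong_add_rcancel)
  then have "x mod q = y mod q" by (simp add: cong_def)
  moreover have "x mod q = x" "y mod q = y" using xy(1,2) assms by auto
  ultimately show "x = y" by simp
qed

lemma CD_variant:
  fixes p q :: int and m :: nat
  assumes p: "prime p" and q: "q = p ^ m" 
  shows "A \<subseteq> {0..<q} \<Longrightarrow> A \<noteq> {} \<Longrightarrow> B \<subseteq> {0..<q} \<Longrightarrow> B \<noteq> {} \<Longrightarrow> incong p B \<Longrightarrow>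
     sumset q A B = {0..<q} \<or> card A + card B \<le> card (sumset q A B) + 1"
proof (induction "card B" arbitrary: A B rule: less_induct)
  case less
  have q0: "q > 0" using q p by (simp add: prime_gt_0_int)
  have finB: "finite B" using less.prems(3) finite_subset by blast
  have finA: "finite A" using less.prems(1) finite_subset by blast
  have finS: "finite (sumset q A B)" using sumset_sub[OF q0] finite_subset by blast
  show ?case
  proof (cases "card B = 1")
    case True
    then obtain b where B: "B = {b}" by (auto simp: card_Suc_eq)
    have "sumset q A B = (\<lambda>x. (x + b) mod q) ` A" unfolding sumset_def B by auto
    moreover have "inj_on (\<lambda>x. (x + b) mod q) A" using less.prems(1) by (rule mod_inj_on)
    ultimately have "card (sumset q A B) = card A" by (simp add: card_image)
    then show ?thesis using True by simp
  next
    case False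
    show ?thesis
    proof (cases "sumset q A B = {0..<q}")
      case True then show ?thesis by simp
    next
      case notfull: False
      have "card B \<ge> 2" using False less.prems(4) finB by (cases "card B") auto
      then obtain b0 b1 where b01: "b0 \<in> B" "b1 \<in> B" "b0 \<noteq> b1"
        by (metis One_nat_def card_le_Suc0_iff_eq not_less_eq_eq numeral_2_eq_2 finB)
      have ncong: "\<not> [b1 = b0] (mod p)" using less.prems(5) b01 unfolding incong_def by metis
      define u where "u = b1 - b0"
      have "\<not> p dvd u" using ncong unfolding u_def by (simp add: cong_iff_dvd_diff)
      then have "coprime u p" using p by (simp add: prime_imp_coprime coprime_commute)
      then have cu: "coprime u q" unfolding q by simp
      have "\<exists>a\<in>A. \<exists>b\<in>B. (a - b0 + b) mod q \<notin> A"
      proof (rule ccontr)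
        assume "\<not> ?thesis"
        then have cl: "\<And>a. a \<in> A \<Longrightarrow> (a + u) mod q \<in> A"
          using b01(2) unfolding u_def by (metis add_diff_eq diff_add_eq)
        have clj: "(a + int j * u) mod q \<in> A" if "a \<in> A" for a j
        proof (induction j)
          case 0 then show ?case using that less.prems(1) by auto
        next
          case (Suc j)
          have "a + int (Suc j) * u = (a + int j * u) + u" by (simp add: algebra_simps)
          then have "(a + int (Suc j) * u) mod q = ((a + int j * u) mod q + u) mod q"
            by (simp add: mod_add_left_eq add.assoc)
          then show ?case using cl[OF Suc] by simp
        qed
        obtain a0 where a0: "a0 \<in> A" using less.prems(2) by auto
        obtain v where v: "[u * v = 1] (mod q)" using cong_solve_coprime_int[OF cu] by auto
        have "A = {0..<q}"
        proof (rule antisym)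
          show "A \<subseteq> {0..<q}" by (rule less.prems(1))
          show "{0..<q} \<subseteq> A"
          proof
            fix y assume y: "y \<in> {0..<q}"
            define j where "j = nat (((y - a0) * v) mod q)"
            have j: "int j = ((y - a0) * v) mod q" unfolding j_def using q0 by simp
            have jc: "[int j = (y - a0) * v] (mod q)" unfolding j by (simp add: cong_def)
            have "[a0 + int j * u = a0 + (y - a0) * v * u] (mod q)"
              by (intro cong_add cong_mult cong_refl jc)
            also have "a0 + (y - a0) * v * u = a0 + (y - a0) * (u * v)" by (simp add: algebra_simps)
            finally have "[a0 + int j * u = a0 + (y - a0) * (u * v)] (mod q)" .
            also have "[a0 + (y - a0) * (u * v) = a0 + (y - a0) * 1] (mod q)"
              by (intro cong_add cong_mult cong_refl v)
            finally have "(a0 + int j * u) mod q = y mod q" by (simp add: cong_def)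
            then show "y \<in> A" using clj[OF a0, of j] y by simp
          qed
        qed
        then show False using sumset_full[OF q0 _ less.prems(4)] notfull by simp
      qed
      then obtain a1 b2 where a1: "a1 \<in> A" and b2: "b2 \<in> B" and nA: "(a1 - b0 + b2) mod q \<notin> A" by blast
      define e where "e = a1 - b0"
      define T where "T = (\<lambda>b. (b + e) mod q)"
      define A' where "A' = A \<union> T ` B"
      define B' where "B' = {b \<in> B. T b \<in> A}"
      have B'B: "B' \<subseteq> B" unfolding B'_def by auto
      have b2B': "b2 \<notin> B'" using nA unfolding B'_def T_def e_def by (simp add: add.commute)
      have b0B': "b0 \<in> B'" using b01(1) a1 less.prems(1) unfolding B'_def T_def e_def by auto
      have cardlt: "card B' < card B" using B'B b2B' b2 finB by (metis psubsetI psubset_card_mono)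
      have A'sub: "A' \<subseteq> {0..<q}" unfolding A'_def T_def using less.prems(1) q0 by auto
      have incB': "incong p B'" using less.prems(5) B'B unfolding incong_def by blast
      have IH: "sumset q A' B' = {0..<q} \<or> card A' + card B' \<le> card (sumset q A' B') + 1"
        using less.hyps[OF cardlt A'sub _ _ _ incB'] a1 b0B' B'B less.prems(3)
        unfolding A'_def by blast
      have sub: "sumset q A' B' \<subseteq> sumset q A B"
      proof
        fix z assume "z \<in> sumset q A' B'"
        then obtain x y where z: "z = (x + y) mod q" and x: "x \<in> A'" and y: "y \<in> B'"
          unfolding sumset_def by blast
        show "z \<in> sumset q A B"
        proof (cases "x \<in> A")
          case True then show ?thesis using z y B'B unfolding sumset_def by blast
        next
          case False
          then obtain b where b: "b \<in> B" "x = T b" using x unfolding A'_def by auto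
          have "z = (T y + b) mod q" unfolding z b T_def by (simp add: mod_add_right_eq add_ac)
          moreover have "T y \<in> A" using y unfolding B'_def by auto
          ultimately show ?thesis using b(1) unfolding sumset_def by blast
        qed
      qed
      have injT: "inj_on T B" unfolding T_def using less.prems(3) by (rule mod_inj_on)
      have "T ` B - A = T ` (B - B')" unfolding B'_def using injT by (auto simp: inj_on_def)
      then have c1: "card (T ` B - A) = card B - card B'"
        using injT B'B finB by (simp add: card_image inj_on_subset card_Diff_subset finite_subset)
      have "A' = A \<union> (T ` B - A)" unfolding A'_def by auto
      then have "card A' = card A + card (T ` B - A)"
        using finA finB by (metis card_Un_disjoint Diff_disjoint finite_Diff finite_imageI)
      then have cardA': "card A' + card B' = card A + card B"
        using c1 B'B finB card_mono[OF finB B'B] by simp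
      from IH show ?thesis
      proof
        assume "sumset q A' B' = {0..<q}"
        then show ?thesis using sub sumset_sub[OF q0, of A B] by auto
      next
        assume "card A' + card B' \<le> card (sumset q A' B') + 1"
        moreover have "card (sumset q A' B') \<le> card (sumset q A B)" using card_mono[OF finS sub] .
        ultimately show ?thesis using cardA' by simp
      qed
    qed
  qed
qed


definition reps :: "int \<Rightarrow> (nat \<Rightarrow> int set) \<Rightarrow> nat set \<Rightarrow> int set" where
  "reps q B J = {y \<in> {0..<q}. \<exists>f. (\<forall>j\<in>J. f j \<in> B j) \<and> y = (\<Sum>j\<in>J. f j) mod q}"

lemma reps_insert:
  assumes "q > 0" "j \<notin> J" "finite J"
  shows "reps q B (insert j J) = sumset q (reps q B J) (B j)"
proof (rule antisym)
  show "reps q B (insert j J) \<subseteq> sumset q (reps q B J) (B j)"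
  proof
    fix y assume "y \<in> reps q B (insert j J)"
    then obtain f where f: "\<forall>i\<in>insert j J. f i \<in> B i" "y = (\<Sum>i\<in>insert j J. f i) mod q"
      unfolding reps_def by blast
    have "y = ((\<Sum>i\<in>J. f i) mod q + f j) mod q"
      using f(2) assms by (simp add: mod_add_right_eq add.commute)
    moreover have "(\<Sum>i\<in>J. f i) mod q \<in> reps q B J"
      unfolding reps_def using f(1) assms(1) by auto
    ultimately show "y \<in> sumset q (reps q B J) (B j)" unfolding sumset_def using f(1) by blast
  qed
  show "sumset q (reps q B J) (B j) \<subseteq> reps q B (insert j J)"
  proof
    fix y assume "y \<in> sumset q (reps q B J) (B j)"
    then obtain x b where y: "y = (x + b) mod q" and x: "x \<in> reps q B J" and b: "b \<in> B j"
      unfolding sumset_def by blast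
    obtain f where f: "\<forall>i\<in>J. f i \<in> B i" "x = (\<Sum>i\<in>J. f i) mod q"
      using x unfolding reps_def by blast
    define f' where "f' = f(j := b)"
    have s: "(\<Sum>i\<in>J. f' i) = (\<Sum>i\<in>J. f i)" unfolding f'_def using assms(2)
      by (intro sum.cong) auto
    have "(\<Sum>i\<in>insert j J. f' i) = b + (\<Sum>i\<in>J. f i)" using assms s by (simp add: f'_def)
    then have "y = (\<Sum>i\<in>insert j J. f' i) mod q" unfolding y f(2) by (simp add: mod_add_left_eq mod_add_right_eq add.commute)
    moreover have "\<forall>i\<in>insert j J. f' i \<in> B i" using f(1) b unfolding f'_def by auto
    moreover have "y \<in> {0..<q}" unfolding y using assms(1) by simp
    ultimately show "y \<in> reps q B (insert j J)" unfolding reps_def by blast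
  qed
qed

lemma reps_bound:
  fixes p q :: int and m e :: nat and B :: "nat \<Rightarrow> int set"
  assumes p: "prime p" and q: "q = p ^ m" and J: "finite J"
    and B: "\<And>j. j \<in> J \<Longrightarrow> B j \<subseteq> {0..<q} \<and> B j \<noteq> {} \<and> incong p (B j) \<and> e \<le> card (B j)"
  shows "reps q B J = {0..<q} \<or> card J * (e - 1) + 1 \<le> card (reps q B J)"
  using J B
proof (induction J rule: finite_induct)
  have q0: "q > 0" using q p by (simp add: prime_gt_0_int)
  case empty
  have "reps q B {} = {0}" unfolding reps_def using q0 by auto
  then show ?case by simp
next
  have q0: "q > 0" using q p by (simp add: prime_gt_0_int)
  case (insert j J)
  have IH: "reps q B J = {0..<q} \<or> card J * (e - 1) + 1 \<le> card (reps q B J)"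
    using insert.IH insert.prems by blast
  have Bj: "B j \<subseteq> {0..<q}" "B j \<noteq> {}" "incong p (B j)" "e \<le> card (B j)" using insert.prems by auto
  have eq: "reps q B (insert j J) = sumset q (reps q B J) (B j)"
    using reps_insert[OF q0 insert.hyps(2,1)] .
  have sub: "reps q B J \<subseteq> {0..<q}" unfolding reps_def by auto
  from IH show ?case
  proof
    assume "reps q B J = {0..<q}"
    then show ?thesis using eq sumset_full[OF q0 _ Bj(2)] by simp
  next
    assume c: "card J * (e - 1) + 1 \<le> card (reps q B J)"
    then have ne: "reps q B J \<noteq> {}" by auto
    have "sumset q (reps q B J) (B j) = {0..<q} \<or>
          card (reps q B J) + card (B j) \<le> card (sumset q (reps q B J) (B j)) + 1"
      using CD_variant[OF p q sub ne Bj(1) Bj(2) Bj(3)] .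
    then show ?thesis
    proof
      assume that: "card (reps q B J) + card (B j) \<le> card (sumset q (reps q B J) (B j)) + 1"
      have "card J * (e - 1) + 1 + (e - 1) \<le> card (reps q B (insert j J))"
      proof -
        have fin: "finite (B j)" using Bj(1) finite_subset by blast
        have "card (B j) \<ge> 1" using Bj(2) fin by (simp add: Suc_le_eq card_gt_0_iff)
        then have h1: "card (B j) - 1 + 1 = card (B j)" by simp
        have h2: "e - 1 \<le> card (B j) - 1" using Bj(4) by simp
        show ?thesis using c h1 h2 that unfolding eq by linarith
      qed
      moreover have "card (insert j J) * (e - 1) + 1 = card J * (e - 1) + 1 + (e - 1)"
        using insert.hyps by simp
      ultimately show ?thesis by simp
    qed (simp add: eq)
  qed
qed

lemma reps_full:
  fixes p q :: int and m e :: nat and B :: "nat \<Rightarrow> int set"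
  assumes p: "prime p" and q: "q = p ^ m" and J: "finite J"
    and B: "\<And>j. j \<in> J \<Longrightarrow> B j \<subseteq> {0..<q} \<and> B j \<noteq> {} \<and> incong p (B j) \<and> e \<le> card (B j)"
    and big: "nat q \<le> card J * (e - 1) + 1"
  shows "reps q B J = {0..<q}"
proof -
  have sub: "reps q B J \<subseteq> {0..<q}" unfolding reps_def by auto
  from reps_bound[OF p q J B] show ?thesis
  proof
    assume "card J * (e - 1) + 1 \<le> card (reps q B J)"
    then have "card {0..<q} \<le> card (reps q B J)" using big by simp
    then show ?thesis using sub by (intro card_seteq) auto
  qed
qed



lemma bij_betw_PiE_comp:
  assumes "bij_betw f A B"
  shows "bij_betw (\<lambda>i. restrict (\<lambda>j. f (i j)) I) (PiE I (\<lambda>_. A)) (PiE I (\<lambda>_. B))"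
proof -
  have inj: "inj_on f A" and img: "f ` A = B" using assms by (auto simp: bij_betw_def)
  show ?thesis unfolding bij_betw_def
  proof
    show "inj_on (\<lambda>i. restrict (\<lambda>j. f (i j)) I) (PiE I (\<lambda>_. A))"
    proof (rule inj_onI)
      fix x y assume x: "x \<in> PiE I (\<lambda>_. A)" and y: "y \<in> PiE I (\<lambda>_. A)"
        and eq: "restrict (\<lambda>j. f (x j)) I = restrict (\<lambda>j. f (y j)) I"
      show "x = y"
      proof (rule PiE_ext[OF x y])
        fix j assume j: "j \<in> I"
        have "f (x j) = f (y j)" using fun_cong[OF eq, of j] j by simp
        then show "x j = y j" using inj x y j by (auto simp: inj_on_def)
      qed
    qed
    show "(\<lambda>i. restrict (\<lambda>j. f (i j)) I) ` PiE I (\<lambda>_. A) = PiE I (\<lambda>_. B)"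
    proof (rule antisym)
      show "(\<lambda>i. restrict (\<lambda>j. f (i j)) I) ` PiE I (\<lambda>_. A) \<subseteq> PiE I (\<lambda>_. B)"
        using img by auto
      show "PiE I (\<lambda>_. B) \<subseteq> (\<lambda>i. restrict (\<lambda>j. f (i j)) I) ` PiE I (\<lambda>_. A)"
      proof
        fix y assume y: "y \<in> PiE I (\<lambda>_. B)"
        define x where "x = restrict (\<lambda>j. inv_into A f (y j)) I"
        have yB: "y j \<in> f ` A" if "j \<in> I" for j using y img that by auto
        have "x \<in> PiE I (\<lambda>_. A)" unfolding x_def using yB by (auto intro: inv_into_into)
        moreover have "restrict (\<lambda>j. f (x j)) I = y"
        proof (rule PiE_ext[OF _ y])
          show "restrict (\<lambda>j. f (x j)) I \<in> PiE I (\<lambda>_. B)"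
            using \<open>x \<in> PiE I (\<lambda>_. A)\<close> img by auto
          fix j assume "j \<in> I"
          then show "restrict (\<lambda>j. f (x j)) I j = y j"
            unfolding x_def using yB by (simp add: f_inv_into_f)
        qed
        ultimately show "y \<in> (\<lambda>i. restrict (\<lambda>j. f (i j)) I) ` PiE I (\<lambda>_. A)" by force
      qed
    qed
  qed
qed

lemma card_bij_filter:
  assumes "bij_betw h X Y"
  shows "card {y \<in> Y. P y} = card {x \<in> X. P (h x)}"
proof -
  have "{y \<in> Y. P y} = h ` {x \<in> X. P (h x)}" using assms by (auto simp: bij_betw_def)
  moreover have "inj_on h {x \<in> X. P (h x)}" using assms by (auto simp: bij_betw_def inj_on_def)
  ultimately show ?thesis by (simp add: card_image)
qed

lemma card_PiE_split:
  assumes fI: "finite I" and j0: "j0 \<notin> I" and fA: "finite A"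
  shows "card {i \<in> PiE (insert j0 I) (\<lambda>_. A). P i} =
         (\<Sum>g \<in> PiE I (\<lambda>_. A). card {y \<in> A. P (g(j0 := y))})"
proof -
  define F where "F = (\<lambda>(g :: 'a \<Rightarrow> 'b, y). g(j0 := y))"
  define S where "S = Sigma (PiE I (\<lambda>_. A)) (\<lambda>g. {y \<in> A. P (g(j0 := y))})"
  have eq: "{i \<in> PiE (insert j0 I) (\<lambda>_. A). P i} = F ` S"
  proof (rule antisym)
    show "{i \<in> PiE (insert j0 I) (\<lambda>_. A). P i} \<subseteq> F ` S"
    proof
      fix i assume i: "i \<in> {i \<in> PiE (insert j0 I) (\<lambda>_. A). P i}"
      have "i(j0 := undefined) \<in> PiE I (\<lambda>_. A)" using i j0 by (intro fun_upd_in_PiE) auto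
      moreover have "i j0 \<in> A" using i by auto
      moreover have "(i(j0 := undefined))(j0 := i j0) = i" by simp
      ultimately have "(i(j0 := undefined), i j0) \<in> S" "F (i(j0 := undefined), i j0) = i"
        using i unfolding S_def F_def by auto
      then show "i \<in> F ` S" by (metis image_eqI)
    qed
    show "F ` S \<subseteq> {i \<in> PiE (insert j0 I) (\<lambda>_. A). P i}"
    proof
      fix i assume "i \<in> F ` S"
      then obtain g y where gy: "g \<in> PiE I (\<lambda>_. A)" "y \<in> A" "P (g(j0 := y))" "i = g(j0 := y)"
        unfolding S_def F_def by auto
      have "g(j0 := y) \<in> PiE (insert j0 I) (\<lambda>_. A)" by (rule PiE_fun_upd[OF gy(2,1)])
      then show "i \<in> {i \<in> PiE (insert j0 I) (\<lambda>_. A). P i}" using gy by simp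
    qed
  qed
  have inj: "inj_on F S"
  proof (rule inj_onI)
    fix x y assume x: "x \<in> S" and y: "y \<in> S" and e: "F x = F y"
    obtain g1 y1 where x': "x = (g1, y1)" by (cases x)
    obtain g2 y2 where y': "y = (g2, y2)" by (cases y)
    have g1: "g1 \<in> PiE I (\<lambda>_. A)" and g2: "g2 \<in> PiE I (\<lambda>_. A)" using x y x' y' unfolding S_def by auto
    have e': "g1(j0 := y1) = g2(j0 := y2)" using e unfolding x' y' F_def by simp
    have "y1 = y2" using fun_cong[OF e', of j0] by simp
    moreover have "g1 = g2"
    proof
      fix j show "g1 j = g2 j"
      proof (cases "j = j0")
        case True
        have "g1 j0 = undefined" by (rule PiE_arb[OF g1 j0])
        moreover have "g2 j0 = undefined" by (rule PiE_arb[OF g2 j0])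
        ultimately show ?thesis using True by simp
      next
        case False then show ?thesis using fun_cong[OF e', of j] by simp
      qed
    qed
    ultimately show "x = y" using x' y' by simp
  qed
  have "card {i \<in> PiE (insert j0 I) (\<lambda>_. A). P i} = card S" unfolding eq using inj by (rule card_image)
  also have "\<dots> = (\<Sum>g \<in> PiE I (\<lambda>_. A). card {y \<in> A. P (g(j0 := y))})"
    unfolding S_def using fI fA by (intro card_SigmaI) (auto intro: finite_PiE)
  finally show ?thesis .
qed

lemma fiber_sum:
  fixes N c :: nat and \<psi> :: "('a \<Rightarrow> nat) \<Rightarrow> 'b::comm_semiring_1"
  assumes fI: "finite I" and N: "N > 0"
  shows "(\<Sum>i \<in> PiE I (\<lambda>_. {..<c*N}). \<psi> (restrict (\<lambda>j. i j mod N) I)) =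
         of_nat (c ^ card I) * (\<Sum>r \<in> PiE I (\<lambda>_. {..<N}). \<psi> r)"
proof -
  define G where "G = (\<lambda>i::'a \<Rightarrow> nat. restrict (\<lambda>j. i j mod N) I)"
  define S where "S = PiE I (\<lambda>_. {..<c*N})"
  define T where "T = PiE I (\<lambda>_. {..<N})"
  have fS: "finite S" unfolding S_def using fI by (intro finite_PiE) auto
  have fT: "finite T" unfolding T_def using fI by (intro finite_PiE) auto
  have GST: "G ` S \<subseteq> T" unfolding G_def S_def T_def using N by auto
  have fib: "{x. x \<in> S \<and> G x = y} = PiE I (\<lambda>j. {t. t < c * N \<and> t mod N = y j})" if y: "y \<in> T" for y
  proof (rule antisym)
    show "{x. x \<in> S \<and> G x = y} \<subseteq> PiE I (\<lambda>j. {t. t < c * N \<and> t mod N = y j})"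
    proof
      fix x assume x: "x \<in> {x. x \<in> S \<and> G x = y}"
      have "x j < c * N \<and> x j mod N = y j" if "j \<in> I" for j
        using x that fun_cong[of "G x" y j] unfolding S_def G_def by auto
      then show "x \<in> PiE I (\<lambda>j. {t. t < c * N \<and> t mod N = y j})" using x unfolding S_def by auto
    qed
    show "PiE I (\<lambda>j. {t. t < c * N \<and> t mod N = y j}) \<subseteq> {x. x \<in> S \<and> G x = y}"
    proof
      fix x assume x: "x \<in> PiE I (\<lambda>j. {t. t < c * N \<and> t mod N = y j})"
      have "x \<in> S" using x unfolding S_def by auto
      moreover have "G x = y"
      proof
        fix j show "G x j = y j"
        proof (cases "j \<in> I")
          case True then show ?thesis using x unfolding G_def by auto
        next
          case False
          have "y j = undefined" using y False unfolding T_def by (rule PiE_arb)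
          then show ?thesis using False unfolding G_def by simp
        qed
      qed
      ultimately show "x \<in> {x. x \<in> S \<and> G x = y}" by simp
    qed
  qed
  have cardfib: "card {x. x \<in> S \<and> G x = y} = c ^ card I" if y: "y \<in> T" for y
  proof -
    have "card {x. x \<in> S \<and> G x = y} = (\<Prod>j\<in>I. card {t. t < c * N \<and> t mod N = y j})"
      using fib[OF y] fI by (simp add: card_PiE)
    also have "\<dots> = (\<Prod>j\<in>I. c)"
      using y unfolding T_def by (intro prod.cong refl card_mod_class) auto
    finally show ?thesis by simp
  qed
  have "(\<Sum>i \<in> S. \<psi> (G i)) = (\<Sum>y\<in>T. \<Sum>x\<in>{x. x \<in> S \<and> G x = y}. \<psi> (G x))"
    using sum.group[OF fS fT GST, of "\<lambda>x. \<psi> (G x)"] by simp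
  also have "\<dots> = (\<Sum>y\<in>T. of_nat (c ^ card I) * \<psi> y)"
  proof (rule sum.cong[OF refl])
    fix y assume y: "y \<in> T"
    have "(\<Sum>x\<in>{x. x \<in> S \<and> G x = y}. \<psi> (G x)) = (\<Sum>x\<in>{x. x \<in> S \<and> G x = y}. \<psi> y)"
      by (intro sum.cong) auto
    also have "\<dots> = of_nat (c ^ card I) * \<psi> y" using cardfib[OF y] by simp
    finally show "(\<Sum>x\<in>{x. x \<in> S \<and> G x = y}. \<psi> (G x)) = of_nat (c ^ card I) * \<psi> y" .
  qed
  also have "\<dots> = of_nat (c ^ card I) * (\<Sum>r \<in> T. \<psi> r)" by (simp add: sum_distrib_left)
  finally show ?thesis unfolding S_def T_def G_def .
qed



definition Ex_sol :: "nat \<Rightarrow> nat \<Rightarrow> nat \<Rightarrow> int \<Rightarrow> nat \<Rightarrow> int \<Rightarrow> bool" where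
  "Ex_sol p g k a0 m v \<longleftrightarrow> (\<exists>t. [a0 * int g ^ (k * t) = v] (mod int p ^ m))"

definition Ssum :: "nat \<Rightarrow> nat \<Rightarrow> (nat \<Rightarrow> int) \<Rightarrow> nat set \<Rightarrow> (nat \<Rightarrow> nat) \<Rightarrow> int" where
  "Ssum g k a I i = (\<Sum>j\<in>I. a j * int g ^ (k * i j))"

context
  fixes p g :: nat
  assumes p: "prime p" and g: "\<forall>m>0. residue_primroot (p ^ m) g"
begin

lemma p_pos: "p > 0" using p by (simp add: prime_gt_0_nat)

lemma gm: "m > 0 \<Longrightarrow> coprime (p ^ m) g \<and> ord (p ^ m) g = totient (p ^ m)"
  using g by (auto simp: residue_primroot_def)

lemma g_pow_cong: 
  assumes "m > 0" "[x = y] (mod totient (p ^ m))"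
  shows "[int g ^ x = int g ^ y] (mod int p ^ m)"
proof -
  have "[g ^ x = g ^ y] (mod p ^ m)" using order_divides_expdiff[of "p ^ m" g x y] gm[OF assms(1)] assms(2)
    by simp
  then show ?thesis by (metis cong_int_iff of_nat_power)
qed

lemma g_pow_cong_iff: 
  assumes "m > 0"
  shows "[int g ^ x = int g ^ y] (mod int p ^ m) \<longleftrightarrow> [x = y] (mod totient (p ^ m))"
proof -
  have "[int g ^ x = int g ^ y] (mod int p ^ m) \<longleftrightarrow> [g ^ x = g ^ y] (mod p ^ m)"
    by (metis cong_int_iff of_nat_power)
  also have "\<dots> \<longleftrightarrow> [x = y] (mod totient (p ^ m))"
    using order_divides_expdiff[of "p ^ m" g x y] gm[OF assms] by simp
  finally show ?thesis .
qed

lemma units_bij: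
  assumes m: "m > 0"
  shows "bij_betw (\<lambda>i. int (g ^ i mod p ^ m)) {..<totient (p ^ m)}
           {x::int. x \<in> {0..<int p ^ m} \<and> coprime x (int p ^ m)}"
proof -
  have p1: "p ^ m > 1" using prime_gt_1_nat[OF p] m by (intro one_less_power) simp_all
  have b1: "bij_betw (\<lambda>i. g ^ i mod p ^ m) {..<totient (p ^ m)} (totatives (p ^ m))"
    using residue_primroot_is_generator[OF p1] g m by simp
  have b2: "bij_betw int (totatives (p ^ m)) {x::int. x \<in> {0..<int p ^ m} \<and> coprime x (int p ^ m)}"
    unfolding bij_betw_def
  proof
    show "inj_on int (totatives (p ^ m))" by (simp add: inj_on_def)
    show "int ` totatives (p ^ m) = {x::int. x \<in> {0..<int p ^ m} \<and> coprime x (int p ^ m)}"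
    proof (rule antisym)
      show "int ` totatives (p ^ m) \<subseteq> {x::int. x \<in> {0..<int p ^ m} \<and> coprime x (int p ^ m)}"
      proof
        fix x assume "x \<in> int ` totatives (p ^ m)"
        then obtain y where y: "y \<in> totatives (p ^ m)" "x = int y" by auto
        have "y \<noteq> p ^ m" using y(1) p1 by (auto simp: totatives_def)
        then have "y < p ^ m" using y(1) by (auto simp: totatives_def)
        moreover have "coprime y (p ^ m)" using y(1) by (auto simp: totatives_def)
        ultimately show "x \<in> {x::int. x \<in> {0..<int p ^ m} \<and> coprime x (int p ^ m)}"
          using y(2) by (metis (mono_tags, lifting) atLeastLessThan_iff coprime_int_iff mem_Collect_eq
              of_nat_0_le_iff of_nat_less_iff of_nat_power)
      qed
      show "{x::int. x \<in> {0..<int p ^ m} \<and> coprime x (int p ^ m)} \<subseteq> int ` totatives (p ^ m)"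
      proof
        fix x :: int assume x: "x \<in> {x::int. x \<in> {0..<int p ^ m} \<and> coprime x (int p ^ m)}"
        define y where "y = nat x"
        have xy: "x = int y" using x unfolding y_def by auto
        have cy: "coprime y (p ^ m)" using x unfolding xy by (metis (mono_tags, lifting) coprime_int_iff mem_Collect_eq of_nat_power)
        have "y \<noteq> 0"
        proof
          assume "y = 0"
          then have "p = 1 \<or> m = 0" using cy by auto
          then show False using p1 by auto
        qed
        moreover have "y < p ^ m" using x unfolding xy by (metis of_nat_less_iff of_nat_power atLeastLessThan_iff mem_Collect_eq)
        ultimately have "y \<in> totatives (p ^ m)" using cy by (auto simp: totatives_def)
        then show "x \<in> int ` totatives (p ^ m)" using xy by auto
      qed
    qed
  qed
  show ?thesis using bij_betw_trans[OF b1 b2] by (simp add: comp_def)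
qed

lemma M_exp:
  assumes m: "m > 0"
  shows "M_count k s a n p m = card {i \<in> {..<s} \<rightarrow>\<^sub>E {..<totient (p ^ m)}.
            [(\<Sum>j<s. a j * int g ^ (k * i j)) = n] (mod int p ^ m)}"
proof -
  define U where "U = {x::int. x \<in> {0..<int p ^ m} \<and> coprime x (int p ^ m)}"
  define h where "h = (\<lambda>i::nat\<Rightarrow>nat. restrict (\<lambda>j. int (g ^ (i j) mod p ^ m)) {..<s})"
  have bij: "bij_betw h ({..<s} \<rightarrow>\<^sub>E {..<totient (p ^ m)}) ({..<s} \<rightarrow>\<^sub>E U)"
    unfolding h_def U_def by (rule bij_betw_PiE_comp[OF units_bij[OF m]])
  have set_eq: "{x \<in> {..<s} \<rightarrow>\<^sub>E {0..<int p ^ m}.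
      (\<forall>j<s. coprime (x j) (int p ^ m)) \<and> [(\<Sum>j<s. a j * x j ^ k) = n] (mod (int p ^ m))}
      = {x \<in> {..<s} \<rightarrow>\<^sub>E U. [(\<Sum>j<s. a j * x j ^ k) = n] (mod (int p ^ m))}"
    unfolding U_def by (auto simp: PiE_iff)
  have "M_count k s a n p m = card {x \<in> {..<s} \<rightarrow>\<^sub>E U. [(\<Sum>j<s. a j * x j ^ k) = n] (mod (int p ^ m))}"
    unfolding M_count_def set_eq ..
  also have "\<dots> = card {i \<in> {..<s} \<rightarrow>\<^sub>E {..<totient (p ^ m)}.
       [(\<Sum>j<s. a j * h i j ^ k) = n] (mod (int p ^ m))}"
    by (rule card_bij_filter[OF bij])
  also have "\<dots> = card {i \<in> {..<s} \<rightarrow>\<^sub>E {..<totient (p ^ m)}.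
            [(\<Sum>j<s. a j * int g ^ (k * i j)) = n] (mod int p ^ m)}"
  proof (rule arg_cong[where f = card], rule Collect_cong, rule conj_cong[OF refl])
    fix i assume i: "i \<in> {..<s} \<rightarrow>\<^sub>E {..<totient (p ^ m)}"
    have "[(\<Sum>j<s. a j * h i j ^ k) = (\<Sum>j<s. a j * int g ^ (k * i j))] (mod int p ^ m)"
    proof (rule cong_sum, rule cong_mult[OF cong_refl])
      fix j assume j: "j \<in> {..<s}"
      have "h i j = int (g ^ i j) mod int p ^ m" using j unfolding h_def by (simp add: zmod_int)
      then have "[h i j = int g ^ i j] (mod int p ^ m)" by (simp add: cong_def)
      then have "[h i j ^ k = (int g ^ i j) ^ k] (mod int p ^ m)" by (rule cong_pow)
      then show "[h i j ^ k = int g ^ (k * i j)] (mod int p ^ m)" by (simp add: power_mult[symmetric] mult.commute)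
    qed
    then show "[(\<Sum>j<s. a j * h i j ^ k) = n] (mod (int p ^ m)) \<longleftrightarrow>
               [(\<Sum>j<s. a j * int g ^ (k * i j)) = n] (mod int p ^ m)"
      using cong_trans cong_sym by blast
  qed
  finally show ?thesis .
qed


lemma Ex_cong:
  assumes "[v = v'] (mod int p ^ m)"
  shows "Ex_sol p g k a0 m v \<longleftrightarrow> Ex_sol p g k a0 m v'"
  unfolding Ex_sol_def using assms cong_trans cong_sym by blast

lemma Ex_down:
  assumes "Ex_sol p g k a0 (Suc m) v"
  shows "Ex_sol p g k a0 m v"
proof -
  obtain t where t: "[a0 * int g ^ (k * t) = v] (mod int p ^ Suc m)" using assms unfolding Ex_sol_def by blast
  have "int p ^ m dvd int p ^ Suc m" by (simp add: le_imp_power_dvd)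
  then have "[a0 * int g ^ (k * t) = v] (mod int p ^ m)" using t cong_dvd_modulus by blast
  then show ?thesis unfolding Ex_sol_def by blast
qed

lemma inner_count:
  assumes m: "m > 0" and a0: "coprime a0 (int p)"
  shows "card {t \<in> {..<totient (p ^ m)}. [a0 * int g ^ (k * t) + S = n] (mod int p ^ m)} =
         (if Ex_sol p g k a0 m (n - S) then gcd k (totient (p ^ m)) else 0)"
proof -
  define N where "N = totient (p ^ m)"
  define L where "L = N div gcd k N"
  have N0: "N > 0" unfolding N_def using p_pos by simp
  have a0': "coprime a0 (int p ^ m)" using a0 by simp
  have eqv: "[a0 * int g ^ (k * t) + S = n] (mod int p ^ m) \<longleftrightarrow> [a0 * int g ^ (k * t) = n - S] (mod int p ^ m)" for t
    by (simp add: cong_iff_dvd_diff algebra_simps)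
  show ?thesis
  proof (cases "Ex_sol p g k a0 m (n - S)")
    case False
    then have "{t \<in> {..<N}. [a0 * int g ^ (k * t) + S = n] (mod int p ^ m)} = {}"
      unfolding Ex_sol_def eqv by blast
    then show ?thesis using False unfolding N_def by simp
  next
    case True
    then obtain t1 where t1: "[a0 * int g ^ (k * t1) = n - S] (mod int p ^ m)" unfolding Ex_sol_def by blast
    have L0: "L > 0" unfolding L_def using N0 by (simp add: div_greater_zero_iff gcd_le2_nat)
    have NL: "N = gcd k N * L" unfolding L_def by simp
    have "{t \<in> {..<N}. [a0 * int g ^ (k * t) + S = n] (mod int p ^ m)} = {t. t < gcd k N * L \<and> t mod L = t1 mod L}"
    proof (rule Collect_cong)
      fix t
      have "[a0 * int g ^ (k * t) + S = n] (mod int p ^ m) \<longleftrightarrow> [a0 * int g ^ (k * t) = a0 * int g ^ (k * t1)] (mod int p ^ m)"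
        unfolding eqv using t1 cong_trans cong_sym by blast
      also have "\<dots> \<longleftrightarrow> [int g ^ (k * t) = int g ^ (k * t1)] (mod int p ^ m)"
        using a0' by (rule cong_mult_lcancel)
      also have "\<dots> \<longleftrightarrow> [k * t = k * t1] (mod N)" unfolding N_def by (rule g_pow_cong_iff[OF m])
      also have "\<dots> \<longleftrightarrow> [t = t1] (mod L)" unfolding L_def by (rule cong_mult_gcd_cancel[OF N0])
      also have "\<dots> \<longleftrightarrow> t mod L = t1 mod L" by (simp add: cong_def)
      finally show "(t \<in> {..<N} \<and> [a0 * int g ^ (k * t) + S = n] (mod int p ^ m)) \<longleftrightarrow>
            (t < gcd k N * L \<and> t mod L = t1 mod L)" using NL by auto
    qed
    also have "card \<dots> = gcd k N" using L0 by (intro card_mod_class) simp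
    finally show ?thesis using True unfolding N_def by simp
  qed
qed

lemma M_formula:
  assumes m: "m > 0" and j0: "j0 < s" and a0: "coprime (a j0) (int p)"
  shows "M_count k s a n p m =
    (\<Sum>i \<in> ({..<s} - {j0}) \<rightarrow>\<^sub>E {..<totient (p ^ m)}.
        if Ex_sol p g k (a j0) m (n - Ssum g k a ({..<s} - {j0}) i) then gcd k (totient (p ^ m)) else 0)"
proof -
  define I where "I = {..<s} - {j0}"
  define N where "N = totient (p ^ m)"
  have sI: "{..<s} = insert j0 I" unfolding I_def using j0 by auto
  have j0I: "j0 \<notin> I" unfolding I_def by simp
  have fI: "finite I" unfolding I_def by simp
  have "M_count k s a n p m = card {i \<in> insert j0 I \<rightarrow>\<^sub>E {..<N}.
            [(\<Sum>j\<in>insert j0 I. a j * int g ^ (k * i j)) = n] (mod int p ^ m)}"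
    unfolding M_exp[OF m] sI N_def ..
  also have "\<dots> = (\<Sum>i \<in> I \<rightarrow>\<^sub>E {..<N}. card {t \<in> {..<N}.
            [(\<Sum>j\<in>insert j0 I. a j * int g ^ (k * (i(j0 := t)) j)) = n] (mod int p ^ m)})"
    by (rule card_PiE_split[OF fI j0I]) simp
  also have "\<dots> = (\<Sum>i \<in> I \<rightarrow>\<^sub>E {..<N}.
        if Ex_sol p g k (a j0) m (n - Ssum g k a I i) then gcd k N else 0)"
  proof (rule sum.cong[OF refl])
    fix i assume i: "i \<in> I \<rightarrow>\<^sub>E {..<N}"
    have "(\<Sum>j\<in>insert j0 I. a j * int g ^ (k * (i(j0 := t)) j)) = a j0 * int g ^ (k * t) + Ssum g k a I i" for t
    proof -
      have "(\<Sum>j\<in>I. a j * int g ^ (k * (i(j0 := t)) j)) = Ssum g k a I i"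
        unfolding Ssum_def using j0I by (intro sum.cong) auto
      then show ?thesis using fI j0I by simp
    qed
    then show "card {t \<in> {..<N}. [(\<Sum>j\<in>insert j0 I. a j * int g ^ (k * (i(j0 := t)) j)) = n] (mod int p ^ m)}
        = (if Ex_sol p g k (a j0) m (n - Ssum g k a I i) then gcd k N else 0)"
      using inner_count[OF m a0, of k "Ssum g k a I i" n] unfolding N_def by simp
  qed
  finally show ?thesis unfolding I_def N_def .
qed

lemma S_mod:
  assumes m: "m > 0"
  shows "[Ssum g k a I i = Ssum g k a I (restrict (\<lambda>j. i j mod totient (p ^ m)) I)] (mod int p ^ m)"
  unfolding Ssum_def
proof (rule cong_sum, rule cong_mult[OF cong_refl])
  fix j assume j: "j \<in> I"
  have "[k * i j = k * (i j mod totient (p ^ m))] (mod totient (p ^ m))"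
    by (simp add: cong_def mod_mult_right_eq)
  then show "[int g ^ (k * i j) = int g ^ (k * restrict (\<lambda>j. i j mod totient (p ^ m)) I j)] (mod int p ^ m)"
    using j g_pow_cong[OF m] by simp
qed

lemma totient_Suc:
  assumes "m > 0"
  shows "totient (p ^ Suc m) = p * totient (p ^ m)"
proof -
  have a: "totient (p ^ Suc m) = p ^ m * (p - 1)" by (rule totient_prime_power_Suc[OF p])
  have b: "totient (p ^ m) = p ^ (m - 1) * (p - 1)" by (rule totient_prime_power[OF p assms])
  have c: "p ^ m = p * p ^ (m - 1)" using assms by (cases m) auto
  have "totient (p ^ Suc m) = p ^ m * (p - 1)" by (rule a)
  also have "\<dots> = p * (p ^ (m - 1) * (p - 1))" using c by (metis mult.assoc)
  also have "\<dots> = p * totient (p ^ m)" using b by simp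
  finally show ?thesis .
qed

lemma Ex_up:
  assumes m: "m > 0" and a0: "coprime a0 (int p)"
    and nd: "\<not> p dvd (k div gcd k (totient (p ^ m)))"
    and E: "Ex_sol p g k a0 m v"
  shows "Ex_sol p g k a0 (Suc m) v"
proof -
  define N where "N = totient (p ^ m)"
  define K where "K = gcd k N"
  define L where "L = N div K"
  define k' where "k' = k div K"
  have N0: "N > 0" unfolding N_def using p_pos by simp
  have K0: "K > 0" unfolding K_def using N0 by simp
  have kL: "k * L = k' * N" unfolding k'_def L_def K_def
    by (metis dvd_div_mult dvd_mult_div_cancel gcd_dvd1 gcd_dvd2 mult.commute)
  have nd': "\<not> p dvd k'" using nd unfolding k'_def K_def N_def .
  define Z where "Z = int g ^ (k * L)"
  have Z1: "[Z = 1] (mod int p ^ m)"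
  proof -
    have "[k * L = 0] (mod N)" unfolding kL by (simp add: cong_def)
    then have "[int g ^ (k * L) = int g ^ 0] (mod int p ^ m)" using g_pow_cong[OF m] unfolding N_def by blast
    then show ?thesis unfolding Z_def by simp
  qed
  have Z2: "\<not> [Z = 1] (mod int p ^ Suc m)"
  proof
    assume "[Z = 1] (mod int p ^ Suc m)"
    then have "[int g ^ (k * L) = int g ^ 0] (mod int p ^ Suc m)" unfolding Z_def by simp
    then have "[k * L = 0] (mod totient (p ^ Suc m))" using g_pow_cong_iff[of "Suc m"] by blast
    then have "p * N dvd k' * N" unfolding kL totient_Suc[OF m] N_def by (simp add: cong_0_iff)
    then have "p dvd k'" using N0 by simp
    then show False using nd' by simp
  qed
  obtain c where c: "Z - 1 = int p ^ m * c" using Z1 by (metis cong_iff_dvd_diff dvd_def)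
  have pc: "\<not> int p dvd c"
  proof
    assume "int p dvd c"
    then have "int p ^ Suc m dvd Z - 1" unfolding c by (simp add: mult_dvd_mono)
    then show False using Z2 by (simp add: cong_iff_dvd_diff)
  qed
  have Zpow: "[Z ^ u = 1 + int p ^ m * c * int u] (mod int p ^ Suc m)" for u
  proof (induction u)
    case 0 then show ?case by simp
  next
    case (Suc u)
    have "[Z ^ Suc u = (1 + int p ^ m * c * int u) * Z] (mod int p ^ Suc m)"
      using Suc by (simp add: cong_mult cong_refl mult.commute)
    also have "(1 + int p ^ m * c * int u) * Z = 1 + int p ^ m * c * int (Suc u) + int p ^ m * int p ^ m * (c * c * int u)"
      using c by (simp add: algebra_simps eq_diff_eq)
    also have "[\<dots> = 1 + int p ^ m * c * int (Suc u) + 0] (mod int p ^ Suc m)"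
    proof (intro cong_add cong_refl)
      have "int p ^ Suc m dvd int p ^ m * int p ^ m" using m
        by (metis Suc_leI le_imp_power_dvd mult_dvd_mono dvd_refl power_Suc power_add power_one_right
            mult.commute dvd_mult_left)
      then show "[int p ^ m * int p ^ m * (c * c * int u) = 0] (mod int p ^ Suc m)"
        by (simp add: cong_0_iff)
    qed
    finally show ?case by simp
  qed
  obtain t where t: "[a0 * int g ^ (k * t) = v] (mod int p ^ m)" using E unfolding Ex_sol_def by blast
  define w where "w = a0 * int g ^ (k * t)"
  obtain r where r: "v - w = int p ^ m * r" using t unfolding w_def by (metis cong_iff_dvd_diff dvd_def cong_sym)
  have cg: "coprime (int g) (int p)" using gm[of 1] by (simp add: coprime_commute)
  have pi: "prime (int p)" using p by simp
  have cc: "coprime c (int p)" using prime_imp_coprime[OF pi pc] by (simp add: coprime_commute)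
  have cw: "coprime (w * c) (int p)" unfolding w_def using a0 cg cc by simp
  obtain x where x: "[w * c * x = 1] (mod int p)" using cong_solve_coprime_int[OF cw] by blast
  define u where "u = nat ((r * x) mod int p)"
  have u: "int u = (r * x) mod int p" unfolding u_def using p_pos by simp
  have wcu: "[w * c * int u = r] (mod int p)"
  proof -
    have "[w * c * int u = w * c * (r * x)] (mod int p)" unfolding u by (intro cong_mult cong_refl) (simp add: cong_def)
    also have "w * c * (r * x) = r * (w * c * x)" by (simp add: algebra_simps)
    also have "[r * (w * c * x) = r * 1] (mod int p)" by (intro cong_mult cong_refl x)
    finally show ?thesis by simp
  qed
  have "[a0 * int g ^ (k * (t + L * u)) = w * Z ^ u] (mod int p ^ Suc m)"
    unfolding w_def Z_def by (simp add: power_add power_mult algebra_simps)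
  also have "[w * Z ^ u = w * (1 + int p ^ m * c * int u)] (mod int p ^ Suc m)"
    by (intro cong_mult cong_refl Zpow)
  also have "w * (1 + int p ^ m * c * int u) = w + int p ^ m * (w * c * int u)" by (simp add: algebra_simps)
  also have "[w + int p ^ m * (w * c * int u) = w + int p ^ m * r] (mod int p ^ Suc m)"
  proof (intro cong_add cong_refl)
    have "[int p ^ m * (w * c * int u) = int p ^ m * r] (mod int p ^ m * int p)"
      by (rule cong_cmult_leftI[OF wcu])
    then show "[int p ^ m * (w * c * int u) = int p ^ m * r] (mod int p ^ Suc m)" by (simp add: mult.commute)
  qed
  also have "w + int p ^ m * r = v" using r by simp
  finally show ?thesis unfolding Ex_sol_def by blast
qed

lemma M_step:
  assumes m: "m > 0" and j0: "j0 < s" and a0: "coprime (a j0) (int p)"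
    and nd: "\<not> p dvd (k div gcd k (totient (p ^ m)))"
    and gs: "gcd k (totient (p ^ Suc m)) = gcd k (totient (p ^ m))"
  shows "M_count k s a n p (Suc m) = p ^ (s - 1) * M_count k s a n p m"
proof -
  define I where "I = {..<s} - {j0}"
  define N where "N = totient (p ^ m)"
  define K where "K = gcd k N"
  define \<psi> where "\<psi> = (\<lambda>r. if Ex_sol p g k (a j0) m (n - Ssum g k a I r) then K else 0)"
  have N0: "N > 0" unfolding N_def using p_pos by simp
  have fI: "finite I" unfolding I_def by simp
  have cI: "card I = s - 1" unfolding I_def using j0 by simp
  have "M_count k s a n p (Suc m) = (\<Sum>i \<in> I \<rightarrow>\<^sub>E {..<p * N}.
        if Ex_sol p g k (a j0) (Suc m) (n - Ssum g k a I i) then K else 0)"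
  proof -
    have eqN: "totient (p ^ Suc m) = p * N" using totient_Suc[OF m] N_def by simp
    have gs'': "gcd k (p * N) = K" using gs eqN unfolding K_def N_def by simp
    show ?thesis
      by (simp only: M_formula[of "Suc m" j0 s a k n, OF zero_less_Suc j0 a0] eqN gs'' I_def)
  qed
  also have "\<dots> = (\<Sum>i \<in> I \<rightarrow>\<^sub>E {..<p * N}. \<psi> (restrict (\<lambda>j. i j mod N) I))"
  proof (rule sum.cong[OF refl])
    fix i assume i: "i \<in> I \<rightarrow>\<^sub>E {..<p * N}"
    have "Ex_sol p g k (a j0) (Suc m) (n - Ssum g k a I i) \<longleftrightarrow> Ex_sol p g k (a j0) m (n - Ssum g k a I i)"
      using Ex_up[OF m a0 nd] Ex_down by blast
    also have "\<dots> \<longleftrightarrow> Ex_sol p g k (a j0) m (n - Ssum g k a I (restrict (\<lambda>j. i j mod N) I))"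
      by (rule Ex_cong) (intro cong_diff cong_refl S_mod[OF m, unfolded N_def[symmetric]])
    finally show "(if Ex_sol p g k (a j0) (Suc m) (n - Ssum g k a I i) then K else 0) =
        \<psi> (restrict (\<lambda>j. i j mod N) I)" unfolding \<psi>_def by simp
  qed
  also have "\<dots> = p ^ card I * (\<Sum>r \<in> I \<rightarrow>\<^sub>E {..<N}. \<psi> r)"
    using fiber_sum[OF fI N0, where c=p and \<psi>=\<psi>] by simp
  also have "(\<Sum>r \<in> I \<rightarrow>\<^sub>E {..<N}. \<psi> r) = M_count k s a n p m"
    unfolding M_formula[of m j0 s a k n, OF m j0 a0] \<psi>_def I_def N_def K_def ..
  finally show ?thesis using cI by simp
qed

end


context
  fixes p g :: nat
  assumes p: "prime p" and g: "\<forall>m>0. residue_primroot (p ^ m) g"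
begin

lemma key_incong:
  assumes k: "k > 0" and aj: "coprime aj (int p)" and m: "m > 0"
    and i: "i < (p - 1) div gcd k (p - 1)" and i': "i' < (p - 1) div gcd k (p - 1)"
    and c: "[(aj * int g ^ (k * i)) mod (int p ^ m) = (aj * int g ^ (k * i')) mod (int p ^ m)] (mod int p)"
  shows "i = i'"
proof -
  have dv: "int p dvd int p ^ m" using m by (simp add: dvd_power)
  have c1': "[aj * int g ^ (k * i) = (aj * int g ^ (k * i)) mod (int p ^ m)] (mod int p ^ m)"
    by (simp add: cong_def)
  have c1: "[aj * int g ^ (k * i) = (aj * int g ^ (k * i)) mod (int p ^ m)] (mod int p)"
    by (rule cong_dvd_modulus[OF c1' dv])
  have c2': "[(aj * int g ^ (k * i')) mod (int p ^ m) = aj * int g ^ (k * i')] (mod int p ^ m)"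
    by (simp add: cong_def)
  have c2: "[(aj * int g ^ (k * i')) mod (int p ^ m) = aj * int g ^ (k * i')] (mod int p)"
    by (rule cong_dvd_modulus[OF c2' dv])
  have "[aj * int g ^ (k * i) = aj * int g ^ (k * i')] (mod int p)"
    using cong_trans[OF cong_trans[OF c1 c] c2] .
  then have "[int g ^ (k * i) = int g ^ (k * i')] (mod int p)"
    using cong_mult_lcancel[OF aj] by blast
  then have "[int g ^ (k * i) = int g ^ (k * i')] (mod int p ^ 1)" by simp
  then have "[k * i = k * i'] (mod totient (p ^ 1))" using g_pow_cong_iff[OF p g, of 1 "k * i" "k * i'"] by simp
  then have "[k * i = k * i'] (mod p - 1)" using totient_prime[OF p] by simp
  moreover have "p - 1 > 0" using prime_gt_1_nat[OF p] by simp
  ultimately have "[i = i'] (mod (p - 1) div gcd k (p - 1))" using cong_mult_gcd_cancel by blast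
  then show ?thesis using i i' cong_less_modulus_unique_nat by blast
qed

lemma M_pos:
  assumes k: "k > 0" and nd: "\<not> (p - 1) dvd k" and p3: "p \<ge> 3"
    and kdec: "k = p ^ \<tau> * k1"
    and J: "J = {j \<in> {..<s}. \<not> int p dvd a j}" and cJ: "card J \<ge> 3 * k"
  shows "M_count k s a n p (Suc \<tau>) > 0"
proof -
  define m0 where "m0 = Suc \<tau>"
  define q where "q = int p ^ m0"
  define N where "N = totient (p ^ m0)"
  define D where "D = gcd k (p - 1)"
  define e where "e = (p - 1) div D"
  have pi: "prime (int p)" using p by simp
  have q0: "q > 0" unfolding q_def using prime_gt_0_nat[OF p] by simp
  have p1: "p - 1 > 0" using p3 by simp
  have NN: "N = p ^ \<tau> * (p - 1)" unfolding N_def m0_def by (rule totient_prime_power_Suc[OF p])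
  have D0: "D > 0" unfolding D_def using p1 by simp
  have De: "p - 1 = D * e" unfolding e_def D_def by simp
  have Dne: "D \<noteq> p - 1" using nd unfolding D_def by (metis gcd_dvd1)
  have e2: "e \<ge> 2"
  proof -
    have "e \<noteq> 0" using De p1 by auto
    moreover have "e \<noteq> 1" using De Dne by auto
    ultimately show ?thesis by simp
  qed
  have eN: "e \<le> N"
  proof -
    have "e \<le> p - 1" unfolding e_def by (rule div_le_dividend)
    also have "\<dots> \<le> N" unfolding NN using prime_gt_0_nat[OF p] by simp
    finally show ?thesis .
  qed
  have aJ: "coprime (a j) (int p)" if "j \<in> J" for j
  proof -
    have "\<not> int p dvd a j" using that unfolding J by simp
    then show ?thesis using prime_imp_coprime[OF pi] coprime_commute by blast
  qed
  have cDp: "coprime D (p ^ \<tau>)"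
  proof -
    have "coprime (p - 1) p" by (rule coprime_diff_one_left_nat) (use prime_gt_0_nat[OF p] in simp)
    moreover obtain r where "p - 1 = D * r" unfolding D_def by (metis gcd_dvd2 dvdE)
    ultimately have "coprime D p" by simp
    then show ?thesis by simp
  qed
  have "D * p ^ \<tau> dvd k" using divides_mult[OF _ _ cDp] kdec unfolding D_def by simp
  then have Dk: "p ^ \<tau> * D \<le> k" using k by (simp add: dvd_imp_le mult.commute)
  have big: "nat q \<le> card J * (e - 1) + 1"
  proof -
    define P where "P = p ^ \<tau>"
    define X where "X = D * (e - 1)"
    have "D * (e - 1) + D = D * e" using e2 by (cases e) auto
    then have X: "X + D = p - 1" unfolding X_def using De by simp
    have "2 * D \<le> D * e" using e2 by simp
    then have X2: "p - 1 \<le> 2 * X" using X De by linarith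
    have ha: "3 * P * (p - 1) \<le> 3 * P * (2 * X)" using X2 by (intro mult_le_mono2)
    have hb: "2 * (P * p) \<le> 3 * P * (p - 1)"
    proof -
      have "P * (2 * p) \<le> P * (3 * (p - 1))" using p3 by (intro mult_le_mono2) simp
      then show ?thesis by (simp only: ac_simps)
    qed
    have hc: "3 * P * (2 * X) = 2 * (3 * P * X)" by simp
    have "P * p \<le> 3 * P * X" using ha hb hc by linarith
    also have "3 * P * X \<le> 3 * k * (e - 1)" using Dk unfolding X_def P_def by (simp add: mult.assoc[symmetric])
    also have "\<dots> \<le> card J * (e - 1)" using cJ by simp
    finally have "P * p \<le> card J * (e - 1)" .
    moreover have "nat q = P * p"
    proof -
      have "q = int (p ^ m0)" unfolding q_def by simp
      then have "nat q = p ^ m0" by (simp only: nat_int)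
      then show ?thesis unfolding m0_def P_def by simp
    qed
    ultimately show ?thesis by simp
  qed
  define B where "B = (\<lambda>j. (\<lambda>i. (a j * int g ^ (k * i)) mod q) ` {..<e})"
  have Bprop: "B j \<subseteq> {0..<q} \<and> B j \<noteq> {} \<and> incong (int p) (B j) \<and> e \<le> card (B j)" if j: "j \<in> J" for j
  proof (intro conjI)
    show "B j \<subseteq> {0..<q}" unfolding B_def using q0 by auto
    have "0 \<in> {..<e}" using e2 by simp
    then show "B j \<noteq> {}" unfolding B_def by blast
    have K: "i = i'" if "i < e" "i' < e"
      "[(a j * int g ^ (k * i)) mod q = (a j * int g ^ (k * i')) mod q] (mod int p)" for i i'
      using key_incong[OF k aJ[OF j], of m0 i i'] that unfolding e_def D_def q_def m0_def by simp
    show "incong (int p) (B j)" unfolding incong_def B_def using K by blast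
    have "inj_on (\<lambda>i. (a j * int g ^ (k * i)) mod q) {..<e}"
      by (rule inj_onI) (use K in auto)
    then show "e \<le> card (B j)" unfolding B_def by (simp add: card_image)
  qed
  have fJ: "finite J" unfolding J by simp
  have full: "reps q B J = {0..<q}"
    by (rule reps_full[OF pi _ fJ Bprop big]) (simp add: q_def)
  define Jc where "Jc = {..<s} - J"
  define n' where "n' = (n - (\<Sum>j\<in>Jc. a j)) mod q"
  have "n' \<in> reps q B J" unfolding full n'_def using q0 by simp
  then obtain f where f: "\<forall>j\<in>J. f j \<in> B j" and fn: "n' = (\<Sum>j\<in>J. f j) mod q"
    unfolding reps_def by blast
  have "\<exists>i. i < e \<and> f j = (a j * int g ^ (k * i)) mod q" if "j \<in> J" for j
    using f that unfolding B_def by auto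
  then obtain ii where ii: "\<And>j. j \<in> J \<Longrightarrow> ii j < e \<and> f j = (a j * int g ^ (k * ii j)) mod q"
    by metis
  define i0 where "i0 = restrict (\<lambda>j. if j \<in> J then ii j else 0) {..<s}"
  have i0P: "i0 \<in> {..<s} \<rightarrow>\<^sub>E {..<N}"
  proof -
    have "ii j < N" if "j \<in> J" for j using ii[OF that] eN by linarith
    moreover have "N > 0" using e2 eN by linarith
    ultimately show ?thesis unfolding i0_def by (auto simp: PiE_iff)
  qed
  have sJ: "{..<s} = J \<union> Jc" "J \<inter> Jc = {}" unfolding Jc_def J by auto
  have "(\<Sum>j<s. a j * int g ^ (k * i0 j)) =
        (\<Sum>j\<in>J. a j * int g ^ (k * i0 j)) + (\<Sum>j\<in>Jc. a j * int g ^ (k * i0 j))"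
    unfolding sJ(1) using sJ(2) fJ by (intro sum.union_disjoint) (auto simp: Jc_def)
  also have "(\<Sum>j\<in>Jc. a j * int g ^ (k * i0 j)) = (\<Sum>j\<in>Jc. a j)"
    unfolding i0_def Jc_def by (intro sum.cong) auto
  also have "(\<Sum>j\<in>J. a j * int g ^ (k * i0 j)) = (\<Sum>j\<in>J. a j * int g ^ (k * ii j))"
    unfolding i0_def J by (intro sum.cong) auto
  finally have sum_eq: "(\<Sum>j<s. a j * int g ^ (k * i0 j)) = (\<Sum>j\<in>J. a j * int g ^ (k * ii j)) + (\<Sum>j\<in>Jc. a j)" .
  have c1: "[(\<Sum>j\<in>J. a j * int g ^ (k * ii j)) = (\<Sum>j\<in>J. f j)] (mod q)"
  proof (rule cong_sum)
    fix j assume "j \<in> J"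
    then show "[a j * int g ^ (k * ii j) = f j] (mod q)" using ii by (simp add: cong_def)
  qed
  have c2: "[(\<Sum>j\<in>J. f j) = n - (\<Sum>j\<in>Jc. a j)] (mod q)" using fn unfolding n'_def by (simp add: cong_def)
  have "[(\<Sum>j<s. a j * int g ^ (k * i0 j)) = n - (\<Sum>j\<in>Jc. a j) + (\<Sum>j\<in>Jc. a j)] (mod q)"
    unfolding sum_eq by (intro cong_add cong_refl cong_trans[OF c1 c2])
  then have "[(\<Sum>j<s. a j * int g ^ (k * i0 j)) = n] (mod int p ^ m0)" unfolding q_def by simp
  then have mem: "i0 \<in> {i \<in> {..<s} \<rightarrow>\<^sub>E {..<N}. [(\<Sum>j<s. a j * int g ^ (k * i j)) = n] (mod int p ^ m0)}"
    using i0P by simp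
  have fin: "finite {i \<in> {..<s} \<rightarrow>\<^sub>E {..<N}. [(\<Sum>j<s. a j * int g ^ (k * i j)) = n] (mod int p ^ m0)}"
    by (rule finite_subset[of _ "{..<s} \<rightarrow>\<^sub>E {..<N}"]) (auto intro: finite_PiE)
  have "card {i \<in> {..<s} \<rightarrow>\<^sub>E {..<N}. [(\<Sum>j<s. a j * int g ^ (k * i j)) = n] (mod int p ^ m0)} > 0"
    using mem fin card_gt_0_iff by blast
  then show ?thesis using M_exp[OF p g, of m0 k s a n] unfolding N_def m0_def by simp
qed

end


theorem lemma5p3:
  fixes k s p :: nat and a :: "nat \<Rightarrow> int" and n :: int
  assumes "k > 0" and "prime p" and "\<not> (p - 1) dvd k"
    and "card {j \<in> {..<s}. \<not> int p dvd a j} \<ge> 3 * k"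
  shows "chi_seq k s a n p \<longlonglongrightarrow> chi_p k s a n p \<and> chi_p k s a n p > 0"
proof -
  note k = assms(1) and p = assms(2) and nd = assms(3) and cJ = assms(4)
  define J where "J = {j \<in> {..<s}. \<not> int p dvd a j}"
  have p2: "p \<noteq> 2" using nd by auto
  have p3: "p \<ge> 3" using prime_ge_2_nat[OF p] p2 by linarith
  have podd: "odd p" using prime_odd_nat[OF p] p3 by simp
  obtain g where g: "\<forall>m>0. residue_primroot (p ^ m) g"
    using residue_primroot_odd_prime_power_exists[OF p podd] by blast
  have "card J > 0" using cJ k unfolding J_def by linarith
  then obtain j0 where j0J: "j0 \<in> J" by (metis card_gt_0_iff ex_in_conv)
  have j0: "j0 < s" using j0J unfolding J_def by simp
  have pi: "prime (int p)" using p by simp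
  have a0: "coprime (a j0) (int p)"
  proof -
    have "\<not> int p dvd a j0" using j0J unfolding J_def by simp
    then show ?thesis using prime_imp_coprime[OF pi] coprime_commute by blast
  qed
  define \<tau> where "\<tau> = multiplicity p k"
  obtain k1 where kdec: "k = p ^ \<tau> * k1" and k1: "\<not> p dvd k1"
  proof -
    have "k \<noteq> 0" using k by simp
    moreover have "\<not> is_unit p" using p3 by simp
    ultimately show ?thesis using that multiplicity_decompose'[of k p] unfolding \<tau>_def by blast
  qed
  define d where "d = gcd k1 (p - 1)"
  have cop1: "coprime k1 p" using prime_imp_coprime[OF p k1] by (simp add: coprime_commute)
  have gcdf: "gcd k (totient (p ^ m)) = p ^ \<tau> * d" if m: "m \<ge> Suc \<tau>" for m
  proof -
    have "totient (p ^ m) = p ^ (m - 1) * (p - 1)" using m by (intro totient_prime_power[OF p]) simp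
    also have "p ^ (m - 1) = p ^ \<tau> * p ^ (m - 1 - \<tau>)" using m by (simp add: power_add[symmetric])
    finally have t: "totient (p ^ m) = p ^ \<tau> * (p ^ (m - 1 - \<tau>) * (p - 1))" by (simp add: mult.assoc)
    have "gcd k (totient (p ^ m)) = p ^ \<tau> * gcd k1 (p ^ (m - 1 - \<tau>) * (p - 1))"
      unfolding t kdec by (simp add: gcd_mult_distrib_nat)
    also have "gcd k1 (p ^ (m - 1 - \<tau>) * (p - 1)) = d"
      unfolding d_def by (rule gcd_mult_right_left_cancel) (simp add: cop1)
    finally show ?thesis .
  qed
  have ndiv: "\<not> p dvd (k div gcd k (totient (p ^ m)))" if m: "m \<ge> Suc \<tau>" for m
  proof -
    obtain k2 where k2: "k1 = d * k2" unfolding d_def by (metis gcd_dvd1 dvdE)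
    have d0: "d > 0" unfolding d_def using p3 by simp
    have pt0: "p ^ \<tau> * d > 0" using prime_gt_0_nat[OF p] d0 by simp
    have kk: "k = (p ^ \<tau> * d) * k2" using kdec k2 by (simp add: mult.assoc)
    have "k div gcd k (totient (p ^ m)) = k div (p ^ \<tau> * d)" using gcdf[OF m] by simp
    also have "\<dots> = k2" using pt0 by (subst kk) simp
    finally have "k div gcd k (totient (p ^ m)) = k2" .
    moreover have "\<not> p dvd k2" using k1 k2 by auto
    ultimately show ?thesis by simp
  qed
  define m0 where "m0 = Suc \<tau>"
  have step: "chi_seq k s a n p (Suc m) = chi_seq k s a n p m" if m: "m \<ge> m0" for m
  proof -
    have m0': "m > 0" using m unfolding m0_def by simp
    have g1: "gcd k (totient (p ^ Suc m)) = p ^ \<tau> * d" by (rule gcdf) (use m in \<open>simp add: m0_def\<close>)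
    have g2: "gcd k (totient (p ^ m)) = p ^ \<tau> * d" by (rule gcdf) (use m in \<open>simp add: m0_def\<close>)
    have gs: "gcd k (totient (p ^ Suc m)) = gcd k (totient (p ^ m))" using g1 g2 by simp
    have nd': "\<not> p dvd (k div gcd k (totient (p ^ m)))" by (rule ndiv) (use m in \<open>simp add: m0_def\<close>)
    have M: "M_count k s a n p (Suc m) = p ^ (s - 1) * M_count k s a n p m"
      by (rule M_step[of p g m j0 s a k n, OF p g m0' j0 a0 nd' gs])
    have T: "totient (p ^ Suc m) = p * totient (p ^ m)" by (rule totient_Suc[OF p g m0'])
    have s1: "p ^ s = p * p ^ (s - 1)" using j0 by (cases s) auto
    have s1r: "real p * real p ^ (s - Suc 0) = real p ^ s" using j0 by (cases s) auto
    have pp: "real p > 0" using prime_gt_0_nat[OF p] by simp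
    show ?thesis unfolding chi_seq_def M T
      using pp by (simp add: s1 s1r power_mult_distrib field_simps)
  qed
  have const: "chi_seq k s a n p m = chi_seq k s a n p m0" if m: "m \<ge> m0" for m
    using m
  proof (induction m rule: nat_induct_at_least)
    case base then show ?case by simp
  next
    case (Suc m) then show ?case using step[of m] by simp
  qed
  have lim: "chi_seq k s a n p \<longlonglongrightarrow> chi_seq k s a n p m0"
  proof (rule Lim_transform_eventually[OF tendsto_const])
    show "\<forall>\<^sub>F x in sequentially. chi_seq k s a n p m0 = chi_seq k s a n p x"
      by (rule eventually_sequentiallyI[of m0], rule sym, erule const)
  qed
  have chip: "chi_p k s a n p = chi_seq k s a n p m0" unfolding chi_p_def using lim by (rule limI)
  have Mpos: "M_count k s a n p m0 > 0"
    unfolding m0_def by (rule M_pos[OF p g k nd p3 kdec J_def]) (use cJ in \<open>simp add: J_def\<close>)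
  have "chi_seq k s a n p m0 > 0" unfolding chi_seq_def using Mpos prime_gt_0_nat[OF p]
    by (simp add: divide_pos_pos)
  then show ?thesis using lim chip by simp
qed


end
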